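(* Let $n\in\mathbb N$ and let $K\subset\mathbb R^n$ with $\mathrm{Outrad}(K)\le1$. Then \[ \mathrm{diam}(K^{cc})\le\sqrt{\frac{2n}{n+1}}\,\mathrm{diam}(K). \]
   Context: $B(x,r)$ is the closed Euclidean ball. For $A\subseteq\mathbb R^n$, $A^c=\bigcap_{x\in A}B(x,1)$ and $A^{cc}=(A^c)^c$ (the $c$-hull of $A$). $\mathrm{Outrad}(A)$ is the infimum of $R\ge0$ with $A\subseteq B(z,R)$ for some $z$; $\mathrm{diam}(A)=\sup\{\|x-y\|_2:x,y\in A\}$. *)

theory Defs
  imports "HOL-Analysis.Analysis"
begin

definition cdual :: "'a::euclidean_space set \<Rightarrow> 'a set" where
  "cdual A = (\<Inter>x\<in>A. cball x 1)"

text \<open>Outer radius, valued in extended reals (infinite for unbounded sets).\<close>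
definition outrad :: "'a::euclidean_space set \<Rightarrow> ereal" where
  "outrad A = Inf {ereal R | R. R \<ge> 0 \<and> (\<exists>z. A \<subseteq> cball z R)}"

end

theory Submission
  imports Defs
begin

lemma mem_cdual: "y \<in> cdual A \<longleftrightarrow> (\<forall>x\<in>A. dist x y \<le> 1)"
  by (auto simp: cdual_def)

lemma cdual_cdual_ball:
  fixes K :: "'a::euclidean_space set"
  assumes R: "R \<le> 1" and K: "K \<subseteq> cball c R"
  shows "cdual (cdual K) \<subseteq> cball c R"
proof
  fix y assume y: "y \<in> cdual (cdual K)"
  have sub: "cball c (1 - R) \<subseteq> cdual K"
  proof
    fix w assume "w \<in> cball c (1 - R)"
    then have "dist c w \<le> 1 - R" by simp
    then show "w \<in> cdual K" unfolding mem_cdual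
      using K dist_triangle[of _ w c] by (smt (verit, best) dist_commute mem_cball subsetD)
  qed
  obtain e :: 'a where e: "norm e = 1" "y - c = norm (y - c) *\<^sub>R e"
  proof (cases "y = c")
    case True
    obtain b :: 'a where "b \<in> Basis" using nonempty_Basis by blast
    then show ?thesis using that[of b] True by simp
  next
    case False
    show ?thesis using that[of "(1 / norm (y - c)) *\<^sub>R (y - c)"] False by simp
  qed
  define w where "w = c - (1 - R) *\<^sub>R e"
  have "w \<in> cball c (1 - R)" using R e unfolding w_def by (simp add: dist_norm)
  then have "dist w y \<le> 1" using sub y unfolding mem_cdual by blast
  moreover have "y - w = (norm (y - c) + (1 - R)) *\<^sub>R e"
  proof -
    have "y - w = (y - c) + (1 - R) *\<^sub>R e" by (simp add: w_def algebra_simps)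
    also have "\<dots> = norm (y - c) *\<^sub>R e + (1 - R) *\<^sub>R e" using e(2) by simp
    finally show ?thesis by (simp add: scaleR_left_distrib)
  qed
  then have "dist w y = norm (y - c) + (1 - R)" using e(1) R
    by (metis abs_of_nonneg add_nonneg_nonneg diff_ge_0_iff_ge dist_commute dist_norm mult.right_neutral norm_ge_zero norm_scaleR)
  ultimately show "y \<in> cball c R" by (simp add: dist_norm norm_minus_commute)
qed

lemma jung_core:
  fixes S K :: "'a::euclidean_space set"
  assumes c: "c \<in> convex hull S" and SK: "S \<subseteq> K" and bK: "bounded K"
    and R: "\<forall>p\<in>S. dist c p = R"
  shows "R^2 \<le> real DIM('a) / (2 * (real DIM('a) + 1)) * (diameter K)^2"
proof -
  define n where "n = real DIM('a)"
  define d where "d = diameter K"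
  obtain T where T: "finite T" "T \<subseteq> S" "card T \<le> DIM('a) + 1" "c \<in> convex hull T"
    using c caratheodory[of S] by blast
  obtain u where u: "\<forall>x\<in>T. 0 \<le> u x" "sum u T = 1" "(\<Sum>x\<in>T. u x *\<^sub>R x) = c"
    using T(4) convex_hull_finite[OF T(1)] by blast
  define m where "m = real (card T)"
  have mle: "m \<le> n + 1" using T(3) unfolding m_def n_def by simp
  have Tne: "T \<noteq> {}" using u(2) by auto
  then have m1: "m \<ge> 1" using T(1) unfolding m_def by (simp add: Suc_leI card_gt_0_iff)
  have zero: "(\<Sum>i\<in>T. u i *\<^sub>R (i - c)) = 0"
  proof -
    have "(\<Sum>i\<in>T. u i *\<^sub>R (i - c)) = (\<Sum>i\<in>T. u i *\<^sub>R i) - (\<Sum>i\<in>T. u i *\<^sub>R c)"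
      by (simp add: scaleR_diff_right sum_subtractf)
    also have "\<dots> = c - (sum u T) *\<^sub>R c" using u(3) by (simp add: scaleR_sum_left)
    finally show ?thesis using u(2) by simp
  qed
  have eq: "(\<Sum>i\<in>T. u i * (dist i j)^2) = 2 * R^2" if j: "j \<in> T" for j
  proof -
    have di: "(dist i j)^2 = 2 * R^2 - 2 * ((i - c) \<bullet> (j - c))" if "i \<in> T" for i
    proof -
      have ni: "(i - c) \<bullet> (i - c) = R^2" using R T(2) that
        by (metis dist_commute dist_norm power2_norm_eq_inner subsetD)
      have nj: "(j - c) \<bullet> (j - c) = R^2" using R T(2) j
        by (metis dist_commute dist_norm power2_norm_eq_inner subsetD)
      have "(dist i j)^2 = ((i - c) - (j - c)) \<bullet> ((i - c) - (j - c))"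
        by (simp add: dist_norm power2_norm_eq_inner)
      also have "\<dots> = (i - c) \<bullet> (i - c) - 2 * ((i - c) \<bullet> (j - c)) + (j - c) \<bullet> (j - c)"
        by (simp add: inner_diff_left inner_diff_right inner_commute)
      finally show ?thesis using ni nj by simp
    qed
    have "(\<Sum>i\<in>T. u i * (dist i j)^2) = (\<Sum>i\<in>T. u i * (2 * R^2) - 2 * ((u i *\<^sub>R (i - c)) \<bullet> (j - c)))"
      by (rule sum.cong) (auto simp: di right_diff_distrib)
    also have "\<dots> = sum u T * (2 * R^2) - 2 * ((\<Sum>i\<in>T. u i *\<^sub>R (i - c)) \<bullet> (j - c))"
      by (simp add: sum_subtractf sum_distrib_left sum_distrib_right inner_sum_left)
    finally show ?thesis using zero u(2) by simp
  qed
  have le: "(\<Sum>i\<in>T. u i * (dist i j)^2) \<le> (1 - u j) * d^2" if j: "j \<in> T" for j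
  proof -
    have "(\<Sum>i\<in>T. u i * (dist i j)^2) = u j * (dist j j)^2 + (\<Sum>i\<in>T-{j}. u i * (dist i j)^2)"
      using sum.remove[OF T(1) j, of "\<lambda>i. u i * (dist i j)^2"] by simp
    also have "\<dots> = (\<Sum>i\<in>T-{j}. u i * (dist i j)^2)" by simp
    also have "\<dots> \<le> (\<Sum>i\<in>T-{j}. u i * d^2)"
    proof (rule sum_mono)
      fix i assume i: "i \<in> T - {j}"
      have "dist i j \<le> d" unfolding d_def
        using diameter_bounded_bound[OF bK] i j T(2) SK by blast
      then have "(dist i j)^2 \<le> d^2" by (simp add: power_mono)
      then show "u i * (dist i j)^2 \<le> u i * d^2" using u(1) i by (simp add: mult_left_mono)
    qed
    also have "\<dots> = (sum u T - u j) * d^2"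
      using sum.remove[OF T(1) j, of u] by (simp add: sum_distrib_right)
    finally show ?thesis using u(2) by simp
  qed
  have "(\<Sum>j\<in>T. 2 * R^2) \<le> (\<Sum>j\<in>T. (1 - u j) * d^2)"
    by (rule sum_mono) (metis eq le)
  then have "2 * m * R^2 \<le> (m - 1) * d^2"
    using u(2) by (simp add: m_def sum_subtractf left_diff_distrib flip: sum_distrib_right)
  then have A: "R^2 \<le> (m - 1) / (2 * m) * d^2" using m1 by (simp add: field_simps)
  have "(m - 1) / (2 * m) \<le> n / (2 * (n + 1))"
    using m1 mle by (simp add: field_simps)
  then have "(m - 1) / (2 * m) * d^2 \<le> n / (2 * (n + 1)) * d^2"
    by (rule mult_right_mono) simp
  then show ?thesis using A unfolding n_def d_def by linarith
qed

lemma aux_lin: "\<not> (x::real) \<le> b - (b - y) / 2 \<Longrightarrow> y + b < x * 2"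
  by (simp add: field_simps)

lemma min_ball:
  fixes K :: "'a::euclidean_space set"
  assumes cK: "compact K" and ne: "K \<noteq> {}"
  shows "\<exists>c R. K \<subseteq> cball c R \<and> (\<forall>c' R'. K \<subseteq> cball c' R' \<longrightarrow> R \<le> R')"
proof -
  obtain p0 where p0: "p0 \<in> K" using ne by blast
  define D where "D = diameter K"
  have bK: "bounded K" using cK compact_imp_bounded by blast
  define A where "A = (cball p0 D \<times> {0..D}) \<inter> (\<Inter>p\<in>K. {z::'a \<times> real. dist (fst z) p \<le> snd z})"
  have cl: "closed {z::'a \<times> real. dist (fst z) p \<le> snd z}" for p
    by (intro closed_Collect_le continuous_intros)
  have cA: "compact A" unfolding A_def
    by (intro compact_Int_closed compact_Times compact_cball compact_Icc closed_INT ballI cl)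
  have D0: "0 \<le> D" unfolding D_def by (simp add: diameter_ge_0 bK)
  have "(p0, D) \<in> A" unfolding A_def using D0 diameter_bounded_bound[OF bK p0] by (auto simp: D_def)
  then have Ane: "A \<noteq> {}" by blast
  obtain z where z: "z \<in> A" "\<forall>y\<in>A. snd z \<le> snd y"
  proof -
    have "continuous_on A snd" by (intro continuous_intros)
    then show ?thesis using continuous_attains_inf[OF cA Ane, of snd] that by blast
  qed
  obtain c R where zcR: "z = (c, R)" by fastforce
  have 1: "K \<subseteq> cball c R" using z(1) zcR unfolding A_def by auto
  have RD: "R \<le> D" using z(1) zcR unfolding A_def by auto
  have 2: "R \<le> R'" if "K \<subseteq> cball c' R'" for c' R'
  proof (cases "dist p0 c' \<le> D \<and> R' \<le> D")
    case True
    have "dist c' p0 \<le> R'" using that p0 by auto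
    then have "R' \<ge> 0" using zero_le_dist[of c' p0] by linarith
    then have "(c', R') \<in> A" unfolding A_def using True that by (auto simp: dist_commute)
    then show ?thesis using z(2) zcR by force
  next
    case False
    have "dist c' p0 \<le> R'" using that p0 by auto
    then show ?thesis using False RD by (auto simp: dist_commute)
  qed
  show ?thesis using 1 2 by blast
qed

lemma min_ball_hull:
  fixes K :: "'a::euclidean_space set"
  assumes cK: "compact K" and sub: "K \<subseteq> cball c R"
    and minl: "\<forall>c' R'. K \<subseteq> cball c' R' \<longrightarrow> R \<le> R'"
  shows "c \<in> convex hull {p\<in>K. dist c p = R}"
proof (rule ccontr)
  assume nc: "c \<notin> convex hull {p\<in>K. dist c p = R}"
  define S where "S = {p\<in>K. dist c p = R}"
  have "S = K \<inter> sphere c R" unfolding S_def by auto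
  then have cS: "compact S" using compact_Int_closed[OF cK closed_sphere] by simp
  have "compact (convex hull S)" using cS by (rule compact_convex_hull)
  then have clH: "closed (convex hull S)" by (rule compact_imp_closed)
  have ncS: "c \<notin> convex hull S" using nc unfolding S_def .
  obtain a b where ab: "a \<bullet> c < b" "\<forall>x\<in>convex hull S. a \<bullet> x > b"
    using separating_hyperplane_closed_point[OF convex_convex_hull clH ncS] by blast
  define \<delta> where "\<delta> = b - a \<bullet> c"
  have d0: "\<delta> > 0" using ab unfolding \<delta>_def by simp
  have aS: "a \<bullet> p > b" if "p \<in> S" for p using ab(2) hull_inc[OF that] by blast
  have Kne: "K \<noteq> {}"
  proof
    assume "K = {}"
    then have "K \<subseteq> cball c (R - 1)" by simp
    then show False using minl by fastforce
  qed
  define V where "V = K \<inter> {p. a \<bullet> p \<le> b - \<delta> / 2}"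
  have cV: "compact V" unfolding V_def
    by (intro compact_Int_closed cK closed_halfspace_le)
  have "\<exists>R'<R. \<forall>p\<in>V. dist c p \<le> R'"
  proof (cases "V = {}")
    case True
    then show ?thesis by (intro exI[of _ "R - 1"]) auto
  next
    case False
    obtain q where q: "q \<in> V" "\<forall>p\<in>V. dist c p \<le> dist c q"
    proof -
      have "continuous_on V (\<lambda>p. dist c p)" by (intro continuous_intros)
      then show ?thesis using continuous_attains_sup[OF cV False, of "\<lambda>p. dist c p"] that by blast
    qed
    have "q \<in> K" using q unfolding V_def by auto
    then have "dist c q \<le> R" using sub by auto
    moreover have "dist c q \<noteq> R"
    proof
      assume "dist c q = R"
      then have "q \<in> S" using \<open>q \<in> K\<close> unfolding S_def by auto
      then have "a \<bullet> q > b" by (rule aS)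
      then show False using q(1) d0 unfolding V_def by auto
    qed
    ultimately show ?thesis using q(2) by (intro exI[of _ "dist c q"]) auto
  qed
  then obtain R' where R': "R' < R" "\<forall>p\<in>V. dist c p \<le> R'" by blast
  define t where "t = min (\<delta> / (2 * (a \<bullet> a + 1))) ((R - R') / (2 * (norm a + 1)))"
  have aa0: "a \<bullet> a \<ge> 0" by simp
  have t0: "t > 0" unfolding t_def using d0 R' aa0
    by (simp add: add_nonneg_pos)
  have t1: "t * (a \<bullet> a) < \<delta>"
  proof -
    have "t \<le> \<delta> / (2 * (a \<bullet> a + 1))" unfolding t_def by simp
    moreover have pos: "0 < 2 * (a \<bullet> a + 1)" by (simp add: add_nonneg_pos)
    ultimately have "t * (2 * (a \<bullet> a + 1)) \<le> \<delta>"
      using pos_le_divide_eq[OF pos] by blast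
    moreover have "a \<bullet> a < 2 * (a \<bullet> a + 1)" by (simp add: distrib_left add_nonneg_pos)
    then have "t * (a \<bullet> a) < t * (2 * (a \<bullet> a + 1))" using t0 by simp
    ultimately show ?thesis by linarith
  qed
  have t2: "t * norm a < R - R'"
  proof -
    have "t \<le> (R - R') / (2 * (norm a + 1))" unfolding t_def by simp
    moreover have pos: "0 < 2 * (norm a + 1)" by (simp add: add_nonneg_pos)
    ultimately have "t * (2 * (norm a + 1)) \<le> R - R'"
      using pos_le_divide_eq[OF pos] by blast
    moreover have "norm a < 2 * (norm a + 1)" by (simp add: distrib_left add_nonneg_pos)
    then have "t * norm a < t * (2 * (norm a + 1))" using t0 by simp
    ultimately show ?thesis by linarith
  qed
  define ct where "ct = c + t *\<^sub>R a"
  have lt: "dist ct p < R" if p: "p \<in> K" for p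
  proof (cases "p \<in> V")
    case True
    have "dist ct p \<le> dist ct c + dist c p" by (rule dist_triangle)
    also have "dist ct c = t * norm a" unfolding ct_def using t0 by (simp add: dist_norm)
    finally have "dist ct p \<le> t * norm a + dist c p" .
    moreover have "dist c p \<le> R'" using R'(2) True by blast
    ultimately show ?thesis using t2 by linarith
  next
    case False
    then have ap: "a \<bullet> (p - c) > \<delta> / 2" using p unfolding V_def \<delta>_def
      by (simp add: inner_diff_right) (metis aux_lin)
    have "dist c p \<le> R" using sub p by auto
    then have R0: "R \<ge> 0" using zero_le_dist[of c p] by linarith
    have "(dist ct p)^2 = (p - c - t *\<^sub>R a) \<bullet> (p - c - t *\<^sub>R a)"
      unfolding ct_def by (simp add: dist_norm power2_norm_eq_inner norm_minus_commute algebra_simps)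
    also have "\<dots> = (p - c) \<bullet> (p - c) - 2 * t * (a \<bullet> (p - c)) + t * (t * (a \<bullet> a))"
      by (simp add: inner_diff_left inner_diff_right inner_commute algebra_simps)
    also have "(p - c) \<bullet> (p - c) = (dist c p)^2"
    proof -
      have "dist c p = norm (p - c)" by (simp add: dist_norm norm_minus_commute)
      then show ?thesis by (simp add: power2_norm_eq_inner)
    qed
    finally have eqd: "(dist ct p)^2 = (dist c p)^2 - 2 * t * (a \<bullet> (p - c)) + t * (t * (a \<bullet> a))" .
    have "(dist c p)^2 \<le> R^2" by (rule power_mono[OF \<open>dist c p \<le> R\<close> zero_le_dist])
    moreover have "t * (t * (a \<bullet> a)) < t * \<delta>" using t1 t0 by simp
    moreover have "t * \<delta> < t * (2 * (a \<bullet> (p - c)))" using ap t0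
      by (intro mult_strict_left_mono) auto
    moreover have "t * (2 * (a \<bullet> (p - c))) = 2 * t * (a \<bullet> (p - c))" by simp
    ultimately have "(dist ct p)^2 < R^2" using eqd by linarith
    then show ?thesis using R0 by (rule power_less_imp_less_base)
  qed
  obtain q where q: "q \<in> K" "\<forall>p\<in>K. dist ct p \<le> dist ct q"
  proof -
    have "continuous_on K (\<lambda>p. dist ct p)" by (intro continuous_intros)
    then show ?thesis using continuous_attains_sup[OF cK Kne, of "\<lambda>p. dist ct p"] that by blast
  qed
  have "K \<subseteq> cball ct (dist ct q)" using q by auto
  then have "R \<le> dist ct q" using minl by blast
  then show False using lt[OF q(1)] by linarith
qed

theorem theorem3p7:
  fixes K :: "'a::euclidean_space set"
  assumes "outrad K \<le> 1"
  shows "diameter (cdual (cdual K))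
           \<le> sqrt (2 * real DIM('a) / (real DIM('a) + 1)) * diameter K"
proof (cases "K = {}")
  case True
  then have "cdual (cdual K) \<subseteq> cball 0 (-1)" by (intro cdual_cdual_ball) auto
  then have "cdual (cdual K) = {}" by auto
  then show ?thesis using True by simp
next
  case Kne: False
  define n where "n = real DIM('a)"
  define X where "X = {ereal R | R. R \<ge> 0 \<and> (\<exists>z. K \<subseteq> cball z R)}"
  have oX: "outrad K = Inf X" unfolding outrad_def X_def by simp
  have "X \<noteq> {}"
  proof
    assume "X = {}"
    then have "outrad K = \<infinity>" using oX by (simp add: top_ereal_def)
    then show False using assms by simp
  qed
  then obtain R1 z where "K \<subseteq> cball z R1" unfolding X_def by blast
  then have bK: "bounded K" using bounded_cball bounded_subset by blast
  define K' where "K' = closure K"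
  have cK': "compact K'" unfolding K'_def using bK compact_closure by blast
  have K'ne: "K' \<noteq> {}" unfolding K'_def using Kne by simp
  obtain c R0 where c: "K' \<subseteq> cball c R0" "\<forall>c' R'. K' \<subseteq> cball c' R' \<longrightarrow> R0 \<le> R'"
    using min_ball[OF cK' K'ne] by blast
  have hull: "c \<in> convex hull {p\<in>K'. dist c p = R0}"
    using min_ball_hull[OF cK' c(1)] c(2) by blast
  have "ereal R0 \<le> Inf X"
  proof (rule Inf_greatest)
    fix x assume "x \<in> X"
    then obtain R z where R: "x = ereal R" "K \<subseteq> cball z R" unfolding X_def by blast
    then have "K' \<subseteq> cball z R" unfolding K'_def by (simp add: closure_minimal)
    then show "ereal R0 \<le> x" using c(2) R(1) by simp
  qed
  then have R01: "R0 \<le> 1" using assms oX by (metis ereal_less_eq(3) one_ereal_def order_trans)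
  have KK': "K \<subseteq> cball c R0" using c(1) closure_subset unfolding K'_def by blast
  obtain k where k: "k \<in> K" using Kne by blast
  have "dist c k \<le> R0" using k KK' by auto
  then have R0pos: "R0 \<ge> 0" using zero_le_dist[of c k] by linarith
  have "diameter (cdual (cdual K)) \<le> diameter (cball c R0)"
    by (rule diameter_subset[OF cdual_cdual_ball[OF R01 KK'] bounded_cball])
  also have "\<dots> = 2 * R0" using R0pos by simp
  finally have D1: "diameter (cdual (cdual K)) \<le> 2 * R0" .
  have dK: "diameter K' = diameter K" unfolding K'_def using diameter_closure[OF bK] .
  have Ssub: "{p\<in>K'. dist c p = R0} \<subseteq> K'" by blast
  have Sd: "\<forall>p\<in>{p\<in>K'. dist c p = R0}. dist c p = R0" by blast
  have J0: "R0^2 \<le> n / (2 * (n + 1)) * (diameter K')^2"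
    unfolding n_def by (rule jung_core[OF hull Ssub compact_imp_bounded[OF cK'] Sd])
  have J: "R0^2 \<le> n / (2 * (n + 1)) * (diameter K)^2" using J0 dK by simp
  have n0: "n + 1 > 0" unfolding n_def by simp
  have eq4: "4 * (n / (2 * (n + 1)) * (diameter K)^2) = 2 * n / (n + 1) * (diameter K)^2"
    using n0 by (simp add: field_simps)
  have "(2 * R0)^2 = 4 * R0^2" by (simp add: power2_eq_square)
  also have "\<dots> \<le> 4 * (n / (2 * (n + 1)) * (diameter K)^2)" using J by simp
  also have "\<dots> = 2 * n / (n + 1) * (diameter K)^2" by (rule eq4)
  finally have sq: "(2 * R0)^2 \<le> 2 * n / (n + 1) * (diameter K)^2" .
  have "2 * R0 \<le> sqrt (2 * n / (n + 1) * (diameter K)^2)" using real_le_rsqrt[OF sq] .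
  also have "\<dots> = sqrt (2 * n / (n + 1)) * sqrt ((diameter K)^2)" by (rule real_sqrt_mult)
  also have "sqrt ((diameter K)^2) = diameter K" using diameter_ge_0[OF bK] by simp
  finally have "2 * R0 \<le> sqrt (2 * n / (n + 1)) * diameter K" .
  then show ?thesis using D1 unfolding n_def by (rule order_trans[rotated])
qed

end
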